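(* Let $K$ be a field, let $\mathscr C$ be a $K$-coalgebra with several objects, and let $\mathcal M$ be a right $\mathscr C$-comodule. Let $X\in Ob(\mathscr C)$ and $m\in\mathcal M(X)$. Then there exists a subobject $\mathcal N\subseteq\mathcal M$ in the category $Com^{\mathscr C}$ of right $\mathscr C$-comodules such that $m\in\mathcal N(X)$ and $\mathcal N(Y)$ is a finite dimensional $K$-vector space for every $Y\in Ob(\mathscr C)$.
   Context: A $K$-coalgebra with several objects $\mathscr C$ consists of a set $Ob(\mathscr C)$, a $K$-vector space $\mathscr C(X,Y)$ for all $X,Y\in Ob(\mathscr C)$, $K$-linear comultiplications $\delta_{XYZ}:\mathscr C(X,Z)\to\mathscr C(Y,Z)\otimes\mathscr C(X,Y)$, written $\delta_{XYZ}(f)=f_{Y1}\otimes f_{Y2}$ (summation suppressed), and counits $\epsilon_X:\mathscr C(X,X)\to K$, such that $(\delta_{YWZ}\otimes \mathrm{id})\circ\delta_{XYZ}=(\mathrm{id}\otimes\delta_{XYW})\circ\delta_{XWZ}$ as maps $\mathscr C(X,Z)\to\mathscr C(W,Z)\otimes\mathscr C(Y,W)\otimes\mathscr C(X,Y)$, and $(\epsilon_Y\otimes\mathrm{id})\circ\delta_{XYY}=\mathrm{id}=(\mathrm{id}\otimes\epsilon_X)\circ\delta_{XXY}$ on $\mathscr C(X,Y)$. Tensor products are over $K$. A right $\mathscr C$-comodule $\mathcal M$ consists of vector spaces $\mathcal M(X)$, $X\in Ob(\mathscr C)$, and linear coactions $\rho_{XY}:\mathcal M(X)\to\mathcal M(Y)\otimes\mathscr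 C(X,Y)$, written $\rho_{XY}(m)=m_{Y0}\otimes m_{Y1}$, such that $(\rho_{ZY}\otimes\mathrm{id}_{\mathscr C(X,Z)})\circ\rho_{XZ}=(\mathrm{id}_{\mathcal M(Y)}\otimes\delta_{XZY})\circ\rho_{XY}$ and $(\mathrm{id}\otimes\epsilon_X)\circ\rho_{XX}=\mathrm{id}$. A morphism $\phi:\mathcal M\to\mathcal N$ is a family of linear maps $\phi(X):\mathcal M(X)\to\mathcal N(X)$ with $\rho^{\mathcal N}_{XY}\circ\phi(X)=(\phi(Y)\otimes\mathrm{id})\circ\rho^{\mathcal M}_{XY}$; this gives the category $Com^{\mathscr C}$. A subobject $\mathcal N\subseteq\mathcal M$ means a family of subspaces $\mathcal N(Y)\subseteq\mathcal M(Y)$ with $\rho_{YZ}(\mathcal N(Y))\subseteq\mathcal N(Z)\otimes\mathscr C(Y,Z)$, so that $\mathcal N$ is a comodule with the restricted coactions. *)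

theory Defs
  imports "HOL.Vector_Spaces"
begin

text \<open>A K-vector space is modelled as a subspace of an ambient type carrying a
scalar multiplication s with vector_space s (library locale).  An element
of a tensor product A (x) B of ambient spaces is represented by a finite formal
sum, i.e. a list of pairs [(a1,b1),...,(an,bn)] standing for the sum of the ai (x) bi.
Two lists denote the same tensor iff the difference of the corresponding
elements of the free vector space on A x B lies in the span of the usual
bi(tri)linearity relations (the standard construction of the tensor product).
Over a field, V (x) W embeds into A (x) B for subspaces V, W, so this equality is
also equality in V (x) W.\<close>

definition ind :: "'p \<Rightarrow> 'p \<Rightarrow> 'k::zero_neq_one" where
  "ind q p = (if p = q then 1 else 0)"

definition free :: "'p list \<Rightarrow> 'p \<Rightarrow> 'k::semiring_1" where
  "free xs p = of_nat (count_list xs p)"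

inductive_set rspan :: "('p \<Rightarrow> 'k::field) set \<Rightarrow> ('p \<Rightarrow> 'k) set" for G where
  zero: "(\<lambda>_. 0) \<in> rspan G"
| step: "r \<in> rspan G \<Longrightarrow> g \<in> G \<Longrightarrow> (\<lambda>p. r p + c * g p) \<in> rspan G"

definition gens2 :: "('k::field \<Rightarrow> 'a::ab_group_add \<Rightarrow> 'a) \<Rightarrow> ('k \<Rightarrow> 'b::ab_group_add \<Rightarrow> 'b)
    \<Rightarrow> ('a \<times> 'b \<Rightarrow> 'k) set" where
  "gens2 sa sb =
     {(\<lambda>p. ind (a + a', b) p - ind (a, b) p - ind (a', b) p) | a a' b. True} \<union>
     {(\<lambda>p. ind (a, b + b') p - ind (a, b) p - ind (a, b') p) | a b b'. True} \<union>
     {(\<lambda>p. ind (sa c a, b) p - c * ind (a, b) p) | c a b. True} \<union>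
     {(\<lambda>p. ind (a, sb c b) p - c * ind (a, b) p) | c a b. True}"

definition gens3 :: "('k::field \<Rightarrow> 'a::ab_group_add \<Rightarrow> 'a) \<Rightarrow> ('k \<Rightarrow> 'b::ab_group_add \<Rightarrow> 'b)
    \<Rightarrow> ('k \<Rightarrow> 'c::ab_group_add \<Rightarrow> 'c) \<Rightarrow> ('a \<times> 'b \<times> 'c \<Rightarrow> 'k) set" where
  "gens3 sa sb sc =
     {(\<lambda>p. ind (a + a', b, e) p - ind (a, b, e) p - ind (a', b, e) p) | a a' b e. True} \<union>
     {(\<lambda>p. ind (a, b + b', e) p - ind (a, b, e) p - ind (a, b', e) p) | a b b' e. True} \<union>
     {(\<lambda>p. ind (a, b, e + e') p - ind (a, b, e) p - ind (a, b, e') p) | a b e e'. True} \<union>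
     {(\<lambda>p. ind (sa c a, b, e) p - c * ind (a, b, e) p) | c a b e. True} \<union>
     {(\<lambda>p. ind (a, sb c b, e) p - c * ind (a, b, e) p) | c a b e. True} \<union>
     {(\<lambda>p. ind (a, b, sc c e) p - c * ind (a, b, e) p) | c a b e. True}"

definition teq2 :: "('k::field \<Rightarrow> 'a::ab_group_add \<Rightarrow> 'a) \<Rightarrow> ('k \<Rightarrow> 'b::ab_group_add \<Rightarrow> 'b)
    \<Rightarrow> ('a \<times> 'b) list \<Rightarrow> ('a \<times> 'b) list \<Rightarrow> bool" where
  "teq2 sa sb xs ys \<longleftrightarrow> (\<lambda>p. free xs p - free ys p) \<in> rspan (gens2 sa sb)"

definition teq3 :: "('k::field \<Rightarrow> 'a::ab_group_add \<Rightarrow> 'a) \<Rightarrow> ('k \<Rightarrow> 'b::ab_group_add \<Rightarrow> 'b)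
    \<Rightarrow> ('k \<Rightarrow> 'c::ab_group_add \<Rightarrow> 'c)
    \<Rightarrow> ('a \<times> 'b \<times> 'c) list \<Rightarrow> ('a \<times> 'b \<times> 'c) list \<Rightarrow> bool" where
  "teq3 sa sb sc xs ys \<longleftrightarrow> (\<lambda>p. free xs p - free ys p) \<in> rspan (gens3 sa sb sc)"

text \<open>Objects: the type 'o.  C X Y \<subseteq> 'c is the space \<C>(X,Y); delta X Y Z f
is a formal sum representing \<delta>_XYZ(f) \<in> \<C>(Y,Z) (x) \<C>(X,Y); eps X is \<epsilon>_X.\<close>
definition coalgebra_so ::
  "('k::field \<Rightarrow> 'c::ab_group_add \<Rightarrow> 'c) \<Rightarrow> ('o \<Rightarrow> 'o \<Rightarrow> 'c set)
   \<Rightarrow> ('o \<Rightarrow> 'o \<Rightarrow> 'o \<Rightarrow> 'c \<Rightarrow> ('c \<times> 'c) list) \<Rightarrow> ('o \<Rightarrow> 'c \<Rightarrow> 'k) \<Rightarrow> bool" where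
  "coalgebra_so sC C delta eps \<longleftrightarrow>
     vector_space sC \<and>
     (\<forall>X Y. module.subspace sC (C X Y)) \<and>
     (\<forall>X Y Z f. f \<in> C X Z \<longrightarrow> set (delta X Y Z f) \<subseteq> C Y Z \<times> C X Y) \<and>
     (\<forall>X Y Z f g. f \<in> C X Z \<longrightarrow> g \<in> C X Z \<longrightarrow>
        teq2 sC sC (delta X Y Z (f + g)) (delta X Y Z f @ delta X Y Z g)) \<and>
     (\<forall>X Y Z c f. f \<in> C X Z \<longrightarrow>
        teq2 sC sC (delta X Y Z (sC c f)) (map (\<lambda>(a, b). (sC c a, b)) (delta X Y Z f))) \<and>
     (\<forall>X f g. f \<in> C X X \<longrightarrow> g \<in> C X X \<longrightarrow> eps X (f + g) = eps X f + eps X g) \<and>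
     (\<forall>X c f. f \<in> C X X \<longrightarrow> eps X (sC c f) = c * eps X f) \<and>
     (\<forall>X Y W Z f. f \<in> C X Z \<longrightarrow>
        teq3 sC sC sC
          (concat (map (\<lambda>(a, b). map (\<lambda>(a1, a2). (a1, a2, b)) (delta Y W Z a)) (delta X Y Z f)))
          (concat (map (\<lambda>(a, b). map (\<lambda>(b1, b2). (a, b1, b2)) (delta X Y W b)) (delta X W Z f)))) \<and>
     (\<forall>X Y f. f \<in> C X Y \<longrightarrow>
        sum_list (map (\<lambda>(a, b). sC (eps Y a) b) (delta X Y Y f)) = f \<and>
        sum_list (map (\<lambda>(a, b). sC (eps X b) a) (delta X X Y f)) = f)"

text \<open>M X \<subseteq> 'm is \<M>(X); rho X Y m is a formal sum representing
\<rho>_XY(m) \<in> \<M>(Y) (x) \<C>(X,Y).\<close>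
definition right_comodule ::
  "('k::field \<Rightarrow> 'c::ab_group_add \<Rightarrow> 'c) \<Rightarrow> ('o \<Rightarrow> 'o \<Rightarrow> 'c set)
   \<Rightarrow> ('o \<Rightarrow> 'o \<Rightarrow> 'o \<Rightarrow> 'c \<Rightarrow> ('c \<times> 'c) list) \<Rightarrow> ('o \<Rightarrow> 'c \<Rightarrow> 'k)
   \<Rightarrow> ('k \<Rightarrow> 'm::ab_group_add \<Rightarrow> 'm) \<Rightarrow> ('o \<Rightarrow> 'm set)
   \<Rightarrow> ('o \<Rightarrow> 'o \<Rightarrow> 'm \<Rightarrow> ('m \<times> 'c) list) \<Rightarrow> bool" where
  "right_comodule sC C delta eps sM M rho \<longleftrightarrow>
     vector_space sM \<and>
     (\<forall>X. module.subspace sM (M X)) \<and>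
     (\<forall>X Y m. m \<in> M X \<longrightarrow> set (rho X Y m) \<subseteq> M Y \<times> C X Y) \<and>
     (\<forall>X Y m n. m \<in> M X \<longrightarrow> n \<in> M X \<longrightarrow>
        teq2 sM sC (rho X Y (m + n)) (rho X Y m @ rho X Y n)) \<and>
     (\<forall>X Y c m. m \<in> M X \<longrightarrow>
        teq2 sM sC (rho X Y (sM c m)) (map (\<lambda>(a, b). (sM c a, b)) (rho X Y m))) \<and>
     (\<forall>X Y Z m. m \<in> M X \<longrightarrow>
        teq3 sM sC sC
          (concat (map (\<lambda>(n, b). map (\<lambda>(n0, n1). (n0, n1, b)) (rho Z Y n)) (rho X Z m)))
          (concat (map (\<lambda>(n, g). map (\<lambda>(g1, g2). (n, g1, g2)) (delta X Z Y g)) (rho X Y m)))) \<and>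
     (\<forall>X m. m \<in> M X \<longrightarrow> sum_list (map (\<lambda>(n, g). sM (eps X g) n) (rho X X m)) = m)"

text \<open>Subobject \<N> \<subseteq> \<M>: subspaces N Y \<subseteq> M Y with \<rho>_YZ(N Y) \<subseteq> N Z (x) \<C>(Y,Z),
i.e. each \<rho>_YZ(n) is represented by some formal sum with entries in N Z \<times> C Y Z.\<close>
definition subcomodule ::
  "('k::field \<Rightarrow> 'c::ab_group_add \<Rightarrow> 'c) \<Rightarrow> ('o \<Rightarrow> 'o \<Rightarrow> 'c set)
   \<Rightarrow> ('k \<Rightarrow> 'm::ab_group_add \<Rightarrow> 'm) \<Rightarrow> ('o \<Rightarrow> 'm set)
   \<Rightarrow> ('o \<Rightarrow> 'o \<Rightarrow> 'm \<Rightarrow> ('m \<times> 'c) list) \<Rightarrow> ('o \<Rightarrow> 'm set) \<Rightarrow> bool" where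
  "subcomodule sC C sM M rho N \<longleftrightarrow>
     (\<forall>Y. module.subspace sM (N Y) \<and> N Y \<subseteq> M Y) \<and>
     (\<forall>Y Z n. n \<in> N Y \<longrightarrow>
        (\<exists>ys. set ys \<subseteq> N Z \<times> C Y Z \<and> teq2 sM sC (rho Y Z n) ys))"

end

theory Submission imports Defs "HOL-Library.Function_Algebras" begin

definition supp :: "('p \<Rightarrow> 'k::zero) \<Rightarrow> 'p set" where "supp r = {p. r p \<noteq> 0}"

definition Ev :: "('k::comm_ring_1 \<Rightarrow> 'v::ab_group_add \<Rightarrow> 'v) \<Rightarrow> ('p \<Rightarrow> 'v) \<Rightarrow> ('p \<Rightarrow> 'k) \<Rightarrow> 'v" where
  "Ev s \<beta> r = (\<Sum>p\<in>supp r. s (r p) (\<beta> p))"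

context module begin

lemma Ev_sup: "finite S \<Longrightarrow> supp r \<subseteq> S \<Longrightarrow> Ev scale \<beta> r = (\<Sum>p\<in>S. scale (r p) (\<beta> p))"
  unfolding Ev_def by (rule sum.mono_neutral_left) (auto simp: supp_def)

lemma Ev_add: "finite (supp r) \<Longrightarrow> finite (supp g) \<Longrightarrow>
   Ev scale \<beta> (\<lambda>p. r p + g p) = Ev scale \<beta> r + Ev scale \<beta> g"
proof -
  assume a: "finite (supp r)" "finite (supp g)"
  let ?S = "supp r \<union> supp g"
  have "Ev scale \<beta> (\<lambda>p. r p + g p) = (\<Sum>p\<in>?S. scale (r p + g p) (\<beta> p))"
    by (rule Ev_sup) (use a in \<open>auto simp: supp_def\<close>)
  also have "\<dots> = (\<Sum>p\<in>?S. scale (r p) (\<beta> p)) + (\<Sum>p\<in>?S. scale (g p) (\<beta> p))"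
    by (simp add: scale_left_distrib sum.distrib)
  also have "\<dots> = Ev scale \<beta> r + Ev scale \<beta> g"
    using a Ev_sup[of ?S r \<beta>] Ev_sup[of ?S g \<beta>] by auto
  finally show ?thesis .
qed

lemma Ev_scale: "finite (supp r) \<Longrightarrow> Ev scale \<beta> (\<lambda>p. c * r p) = scale c (Ev scale \<beta> r)"
proof -
  assume a: "finite (supp r)"
  have "Ev scale \<beta> (\<lambda>p. c * r p) = (\<Sum>p\<in>supp r. scale (c * r p) (\<beta> p))"
    by (rule Ev_sup) (use a in \<open>auto simp: supp_def\<close>)
  also have "\<dots> = scale c (Ev scale \<beta> r)"
    using a by (simp add: Ev_def scale_sum_right)
  finally show ?thesis .
qed

lemma Ev_diff: "finite (supp r) \<Longrightarrow> finite (supp g) \<Longrightarrow>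
   Ev scale \<beta> (\<lambda>p. r p - g p) = Ev scale \<beta> r - Ev scale \<beta> g"
proof -
  assume a: "finite (supp r)" "finite (supp g)"
  have f: "finite (supp (\<lambda>p. (-1) * g p))" using a(2) by (simp add: supp_def)
  have "Ev scale \<beta> (\<lambda>p. r p - g p) = Ev scale \<beta> (\<lambda>p. r p + (\<lambda>p. (-1) * g p) p)" by simp
  also have "\<dots> = Ev scale \<beta> r - Ev scale \<beta> g"
    using Ev_add[OF a(1) f] Ev_scale[OF a(2), of _ "-1"] by simp
  finally show ?thesis .
qed

lemma Ev_zero: "Ev scale \<beta> (\<lambda>_. 0) = 0" by (simp add: Ev_def supp_def)

lemma Ev_ind: "Ev scale \<beta> (ind q) = \<beta> q"
proof -
  have "supp (ind q :: _ \<Rightarrow> 'a) = {q}" by (auto simp: supp_def ind_def)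
  then show ?thesis by (simp add: Ev_def ind_def)
qed

end

lemma supp_ind: "supp (ind q) \<subseteq> {q}" by (auto simp: supp_def ind_def)
lemma fin_ind: "finite (supp (ind q))" by (rule finite_subset[OF supp_ind]) simp
lemma fin_add: "finite (supp r) \<Longrightarrow> finite (supp g) \<Longrightarrow> finite (supp (\<lambda>p. (r p::'a::monoid_add) + g p))"
  by (rule finite_subset[of _ "supp r \<union> supp g"]) (auto simp: supp_def)
lemma fin_diff: "finite (supp r) \<Longrightarrow> finite (supp g) \<Longrightarrow> finite (supp (\<lambda>p. (r p::'a::ab_group_add) - g p))"
  by (rule finite_subset[of _ "supp r \<union> supp g"]) (auto simp: supp_def)
lemma fin_scale: "finite (supp r) \<Longrightarrow> finite (supp (\<lambda>p. (c::'a::ring) * r p))"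
  by (rule finite_subset[of _ "supp r"]) (auto simp: supp_def)

lemma rspan_fin: "r \<in> rspan G \<Longrightarrow> (\<And>g. g \<in> G \<Longrightarrow> finite (supp g)) \<Longrightarrow> finite (supp r)"
proof (induction rule: rspan.induct)
  case zero then show ?case by (simp add: supp_def)
next
  case (step r g c) then show ?case by (intro fin_add fin_scale) auto
qed

lemma (in vector_space) rspan_Ev:
  assumes "r \<in> rspan G" "\<And>g. g \<in> G \<Longrightarrow> finite (supp g)"
    "P 0" "\<And>x y c. P x \<Longrightarrow> P y \<Longrightarrow> P (x + scale c y)" "\<And>g. g \<in> G \<Longrightarrow> P (Ev scale \<beta> g)"
  shows "P (Ev scale \<beta> r)"
  using assms(1)
proof (induction rule: rspan.induct)
  case zero then show ?case using assms(3) by (simp add: Ev_zero)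
next
  case (step r g c)
  have "finite (supp r)" using rspan_fin[OF step(1) assms(2)] .
  moreover have "finite (supp g)" using assms(2) step(2) .
  ultimately show ?case using step assms(4,5) using Ev_add[OF \<open>finite (supp r)\<close> fin_scale[OF \<open>finite (supp g)\<close>]] Ev_scale[OF \<open>finite (supp g)\<close>] by simp
qed

lemma free_Nil: "free [] = (\<lambda>_. 0)" by (auto simp: free_def)
lemma free_Cons: "free (x # xs) = (\<lambda>p. free xs p + ind x p)"
  by (auto simp: free_def ind_def fun_eq_iff add.commute)
lemma free_append: "free (xs @ ys) = (\<lambda>p. free xs p + free ys p)"
  by (auto simp: free_def fun_eq_iff)
lemma fin_free: "finite (supp (free xs))"
  by (rule finite_subset[of _ "set xs"]) (auto simp: supp_def free_def, metis count_list_0_iff of_nat_0)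

lemma (in module) Ev_free: "Ev scale \<beta> (free xs) = sum_list (map \<beta> xs)"
proof (induction xs)
  case Nil then show ?case by (simp only: free_Nil Ev_zero) simp
next
  case (Cons x xs)
  have "Ev scale \<beta> (free (x # xs)) = Ev scale \<beta> (free xs) + Ev scale \<beta> (ind x)"
    unfolding free_Cons by (rule Ev_add[OF fin_free fin_ind])
  then show ?case using Cons by (simp add: Ev_ind add.commute)
qed


lemma gen_rspan: "g \<in> G \<Longrightarrow> g \<in> rspan G"
  using rspan.step[OF rspan.zero, of g G 1] by simp

lemma rspan_comb: "q \<in> rspan G \<Longrightarrow> r \<in> rspan G \<Longrightarrow> (\<lambda>p. r p + c * q p) \<in> rspan G"
proof (induction q rule: rspan.induct)
  case zero then show ?case by simp
next
  case (step q g d)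
  have "(\<lambda>p. (\<lambda>p. r p + c * q p) p + (c * d) * g p) \<in> rspan G"
    using rspan.step[OF step.IH[OF step.prems] step.hyps(2), of "c*d"] by simp
  then show ?case by (simp add: algebra_simps)
qed

lemma fin_gens2: "g \<in> gens2 sa sb \<Longrightarrow> finite (supp g)"
  unfolding gens2_def by (auto intro!: fin_diff fin_ind fin_scale)
lemma fin_gens3: "g \<in> gens3 sa sb sc \<Longrightarrow> finite (supp g)"
  unfolding gens3_def by (auto intro!: fin_diff fin_ind fin_scale)

lemma (in vector_space) Ev3: "Ev scale \<beta> (\<lambda>p. ind q1 p - ind q2 p - ind q3 p) = \<beta> q1 - \<beta> q2 - \<beta> q3"
  by (simp add: Ev_diff fin_diff fin_ind Ev_ind)
lemma (in vector_space) Ev2: "Ev scale \<beta> (\<lambda>p. ind q1 p - c * ind q2 p) = \<beta> q1 - scale c (\<beta> q2)"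
  by (simp add: Ev_diff fin_scale fin_ind Ev_ind Ev_scale)

lemma teq2_sum:
  assumes "teq2 sa sb xs ys" "vector_space s"
    and b1: "\<And>a a' b. \<beta> (a + a', b) = \<beta> (a, b) + \<beta> (a', b)"
    and b2: "\<And>a b b'. \<beta> (a, b + b') = \<beta> (a, b) + \<beta> (a, b')"
    and b3: "\<And>c a b. \<beta> (sa c a, b) = s c (\<beta> (a, b))"
    and b4: "\<And>c a b. \<beta> (a, sb c b) = s c (\<beta> (a, b))"
  shows "sum_list (map \<beta> xs) = sum_list (map \<beta> ys)"
proof -
  interpret V: vector_space s by fact
  have r: "(\<lambda>p. free xs p - free ys p) \<in> rspan (gens2 sa sb)" using assms(1) by (simp add: teq2_def)
  have "Ev s \<beta> (\<lambda>p. free xs p - free ys p) = 0"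
  proof (rule V.rspan_Ev[OF r fin_gens2, where P = "\<lambda>v. v = 0"])
    fix g assume "g \<in> gens2 sa sb"
    then show "Ev s \<beta> g = 0"
      unfolding gens2_def by (auto simp: V.Ev3 V.Ev2 b1 b2 b3 b4)
  qed auto
  then show ?thesis by (simp add: V.Ev_diff fin_free V.Ev_free)
qed

definition sF :: "'k::field \<Rightarrow> ('q \<Rightarrow> 'k) \<Rightarrow> ('q \<Rightarrow> 'k)" where "sF c h = (\<lambda>x. c * h x)"

lemma vs_fun: "vector_space (sF :: 'k::field \<Rightarrow> ('q \<Rightarrow> 'k) \<Rightarrow> _)"
  by unfold_locales (auto simp: sF_def fun_eq_iff algebra_simps)

lemma free_map_sum: "sum_list (map (\<lambda>p. ind (f p)) xs) = free (map f xs)"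
  by (induction xs) (auto simp: free_Nil free_Cons fun_eq_iff add.commute)

lemma push_rspan:
  assumes "(\<lambda>p. free xs p - free ys p) \<in> rspan G1" "\<And>g. g\<in>G1 \<Longrightarrow> finite (supp g)"
    "\<And>g. g \<in> G1 \<Longrightarrow> Ev sF (\<lambda>p. ind (f p)) g \<in> rspan G2"
  shows "(\<lambda>p. free (map f xs) p - free (map f ys) p) \<in> rspan G2"
proof -
  interpret V: vector_space sF by (rule vs_fun)
  have "Ev sF (\<lambda>p. ind (f p)) (\<lambda>p. free xs p - free ys p) \<in> rspan G2"
  proof (rule V.rspan_Ev[OF assms(1) assms(2)])
    show "0 \<in> rspan G2" using rspan.zero by (simp add: zero_fun_def)
    fix x y c assume "x \<in> rspan G2" "y \<in> rspan G2"
    then show "x + sF c y \<in> rspan G2" using rspan_comb[of y G2 x c] by (simp add: sF_def plus_fun_def)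
  qed (use assms(3) in auto)
  then show ?thesis by (simp add: V.Ev_diff fin_free V.Ev_free free_map_sum fun_diff_def)
qed


section \<open>Calculus of formal tensors\<close>

definition req :: "('p \<Rightarrow> 'k::field) set \<Rightarrow> ('p \<Rightarrow> 'k) \<Rightarrow> ('p \<Rightarrow> 'k) \<Rightarrow> bool" where
  "req G f g \<longleftrightarrow> (\<lambda>p. f p - g p) \<in> rspan G"

lemma rspan_scale: "r \<in> rspan G \<Longrightarrow> (\<lambda>p. c * r p) \<in> rspan G"
proof -
  assume "r \<in> rspan G"
  then have "(\<lambda>p. (\<lambda>_. 0) p + c * r p) \<in> rspan G" by (rule rspan_comb[OF _ rspan.zero])
  then show ?thesis by simp
qed
lemma rspan_add: "r \<in> rspan G \<Longrightarrow> q \<in> rspan G \<Longrightarrow> (\<lambda>p. r p + q p) \<in> rspan G"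
  using rspan_comb[of q G r 1] by simp

lemma req_refl: "req G f f" by (simp add: req_def rspan.zero)
lemma req_eqI: "f = g \<Longrightarrow> req G f g" by (simp add: req_refl)
lemma req_sym: "req G f g \<Longrightarrow> req G g f"
  unfolding req_def
proof -
  assume "(\<lambda>p. f p - g p) \<in> rspan G"
  then have "(\<lambda>p. (-1) * (f p - g p)) \<in> rspan G" by (rule rspan_scale)
  then show "(\<lambda>p. g p - f p) \<in> rspan G" by simp
qed
lemma req_trans: "req G f g \<Longrightarrow> req G g h \<Longrightarrow> req G f h"
  unfolding req_def using rspan_add[of "\<lambda>p. f p - g p" G "\<lambda>p. g p - h p"] by (simp add: algebra_simps)
declare req_trans[trans]
lemma req_add: "req G f f' \<Longrightarrow> req G g g' \<Longrightarrow> req G (\<lambda>p. f p + g p) (\<lambda>p. f' p + g' p)"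
  unfolding req_def using rspan_add[of "\<lambda>p. f p - f' p" G "\<lambda>p. g p - g' p"] by (simp add: algebra_simps)
lemma req_scale: "req G f f' \<Longrightarrow> req G (\<lambda>p. c * f p) (\<lambda>p. c * f' p)"
  unfolding req_def using rspan_scale[of "\<lambda>p. f p - f' p" G c] by (simp add: algebra_simps)
lemma req_sum: "finite S \<Longrightarrow> (\<And>i. i \<in> S \<Longrightarrow> req G (f i) (g i)) \<Longrightarrow>
   req G (\<lambda>p. \<Sum>i\<in>S. f i p) (\<lambda>p. \<Sum>i\<in>S. g i p)"
proof (induction S rule: finite_induct)
  case empty then show ?case by (simp add: req_refl)
next
  case (insert x F)
  then show ?case using req_add[of G "f x" "g x" "\<lambda>p. \<Sum>i\<in>F. f i p" "\<lambda>p. \<Sum>i\<in>F. g i p"] by simp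
qed

lemma teq2_req: "teq2 sa sb xs ys \<longleftrightarrow> req (gens2 sa sb) (free xs) (free ys)"
  by (simp add: teq2_def req_def)

lemma req_gen3: "(\<lambda>p. ind q1 p - ind q2 p - ind q3 p) \<in> G \<Longrightarrow> req G (ind q1) (\<lambda>p. ind q2 p + ind q3 p)"
  unfolding req_def using gen_rspan[of "\<lambda>p. ind q1 p - ind q2 p - ind q3 p" G] by (simp add: algebra_simps)
lemma req_gen2: "(\<lambda>p. ind q1 p - c * ind q2 p) \<in> G \<Longrightarrow> req G (ind q1) (\<lambda>p. c * ind q2 p)"
  unfolding req_def by (rule gen_rspan)

context fixes sa :: "'k::field \<Rightarrow> 'a::ab_group_add \<Rightarrow> 'a" and sb :: "'k \<Rightarrow> 'b::ab_group_add \<Rightarrow> 'b"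
begin

lemma t_addL: "req (gens2 sa sb) (ind (a + a', b)) (\<lambda>p. ind (a, b) p + ind (a', b) p)"
  by (rule req_gen3) (unfold gens2_def, blast)
lemma t_addR: "req (gens2 sa sb) (ind (a, b + b')) (\<lambda>p. ind (a, b) p + ind (a, b') p)"
  by (rule req_gen3) (unfold gens2_def, blast)
lemma t_scL: "req (gens2 sa sb) (ind (sa c a, b)) (\<lambda>p. c * ind (a, b) p)"
  by (rule req_gen2) (unfold gens2_def, blast)
lemma t_scR: "req (gens2 sa sb) (ind (a, sb c b)) (\<lambda>p. c * ind (a, b) p)"
  by (rule req_gen2) (unfold gens2_def, blast)
lemma t_swap: "req (gens2 sa sb) (ind (a, sb c b)) (ind (sa c a, b))"
  using req_trans[OF t_scR req_sym[OF t_scL]] .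

lemma t_zeroR: assumes "vector_space sb" shows "req (gens2 sa sb) (ind (a, 0)) (\<lambda>_. 0)"
proof -
  interpret vector_space sb by fact
  show ?thesis using t_scR[of a 0 0] by simp
qed
lemma t_zeroL: assumes "vector_space sa" shows "req (gens2 sa sb) (ind (0, b)) (\<lambda>_. 0)"
proof -
  interpret vector_space sa by fact
  show ?thesis using t_scL[of 0 0 b] by simp
qed

lemma t_sumR: assumes "vector_space sb" "finite S" shows
  "req (gens2 sa sb) (ind (a, \<Sum>i\<in>S. h i)) (\<lambda>p. \<Sum>i\<in>S. ind (a, h i) p)"
  using assms(2)
proof (induction S rule: finite_induct)
  case empty then show ?case using t_zeroR[OF assms(1)] by simp
next
  case (insert x F)
  have "req (gens2 sa sb) (ind (a, h x + (\<Sum>i\<in>F. h i))) (\<lambda>p. ind (a, h x) p + ind (a, \<Sum>i\<in>F. h i) p)"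
    by (rule t_addR)
  also note req_add[OF req_refl insert.IH]
  finally show ?case using insert by simp
qed

end


section \<open>Linear functionals\<close>

definition lin :: "('k::field \<Rightarrow> 'c::ab_group_add \<Rightarrow> 'c) \<Rightarrow> ('c \<Rightarrow> 'k) \<Rightarrow> bool" where
  "lin s \<phi> \<longleftrightarrow> (\<forall>x y. \<phi> (x + y) = \<phi> x + \<phi> y) \<and> (\<forall>c x. \<phi> (s c x) = c * \<phi> x)"

lemma lin_add: "lin s \<phi> \<Longrightarrow> \<phi> (x + y) = \<phi> x + \<phi> y" by (simp add: lin_def)
lemma lin_scale: "lin s \<phi> \<Longrightarrow> \<phi> (s c x) = c * \<phi> x" by (simp add: lin_def)
lemma lin_zero: "lin s \<phi> \<Longrightarrow> \<phi> 0 = 0"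
  using lin_add[of s \<phi> 0 0] by (metis add.right_neutral add_left_cancel)
lemma lin_sum: "lin s \<phi> \<Longrightarrow> \<phi> (\<Sum>i\<in>S. f i) = (\<Sum>i\<in>S. \<phi> (f i))"
  by (induction S rule: infinite_finite_induct) (auto simp: lin_zero lin_add)

lemma vs_k: "vector_space ((*) :: 'k::field \<Rightarrow> 'k \<Rightarrow> 'k)"
  by unfold_locales (auto simp: algebra_simps)

lemma linear_lin: "Vector_Spaces.linear s (*) g \<Longrightarrow> lin s g"
  by (simp add: linear_iff lin_def)

lemma ext_lin:
  assumes vs: "vector_space s" and S: "module.subspace s S"
    and fa: "\<And>x y. x \<in> S \<Longrightarrow> y \<in> S \<Longrightarrow> f (x + y) = f x + f y"
    and fs: "\<And>c x. x \<in> S \<Longrightarrow> f (s c x) = c * f x"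
  shows "\<exists>g. lin s g \<and> (\<forall>x\<in>S. g x = f x)"
proof -
  interpret V: vector_space s by fact
  obtain B where B: "B \<subseteq> S" "V.independent B" "S \<subseteq> V.span B" by (rule V.basis_exists)
  interpret P: vector_space_pair s "(*)" using vs vs_k by (simp add: vector_space_pair_def)
  obtain g where g: "Vector_Spaces.linear s (*) g" "\<forall>x\<in>B. g x = f x"
    using P.linear_independent_extend[OF B(2), of f] by blast
  have lg: "lin s g" by (rule linear_lin[OF g(1)])
  have sB: "V.span B \<subseteq> S" using V.span_minimal[OF B(1) S] .
  have "0 \<in> S" using S by (simp add: V.subspace_def)
  then have f0: "f 0 = 0" using fa[of 0 0] by (metis add.right_neutral add_left_cancel)
  have "\<forall>x\<in>V.span B. g x = f x"
  proof
    fix x assume "x \<in> V.span B"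
    then have "x \<in> V.span B \<and> g x = f x"
    proof (induction rule: V.span_induct_alt)
      case base then show ?case using f0 lin_zero[OF lg] by (simp add: V.span_zero)
    next
      case (step c x y)
      have xS: "x \<in> S" using step B(1) by auto
      have yS: "y \<in> S" using step sB by auto
      have cxS: "s c x \<in> S" using xS S by (simp add: V.subspace_def)
      have "g (s c x + y) = f (s c x + y)"
        using step g(2) lin_add[OF lg] lin_scale[OF lg] fa[OF cxS yS] fs[OF xS] by simp
      then show ?case using step by (simp add: V.span_add V.span_scale V.span_base)
    qed
    then show "g x = f x" ..
  qed
  then show ?thesis using lg B(3) by blast
qed

lemma dual_basis:
  assumes vs: "vector_space s" and F: "finite F"
  shows "\<exists>Bs \<psi>. Bs \<subseteq> F \<and> (\<forall>b. lin s (\<psi> b)) \<and> (\<forall>x\<in>F. x = (\<Sum>b\<in>Bs. s (\<psi> b x) b))"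
proof -
  interpret V: vector_space s by fact
  obtain Bs where B: "Bs \<subseteq> F" "V.independent Bs" "F \<subseteq> V.span Bs" by (rule V.basis_exists)
  have fB: "finite Bs" using B(1) F finite_subset by auto
  interpret P: vector_space_pair s "(*)" using vs vs_k by (simp add: vector_space_pair_def)
  have "\<forall>b. \<exists>g. Vector_Spaces.linear s (*) g \<and> (\<forall>x\<in>Bs. g x = (if x = b then 1 else 0))"
    by (intro allI P.linear_independent_extend[OF B(2)])
  then obtain \<psi> where \<psi>: "\<And>b. Vector_Spaces.linear s (*) (\<psi> b)"
    "\<And>b x. x \<in> Bs \<Longrightarrow> \<psi> b x = (if x = b then 1 else 0)"
    using choice[of "\<lambda>b g. Vector_Spaces.linear s (*) g \<and> (\<forall>x\<in>Bs. g x = (if x = b then 1 else 0))"] by blast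
  have l: "\<And>b. lin s (\<psi> b)" using linear_lin[OF \<psi>(1)] .
  have "\<forall>x\<in>F. x = (\<Sum>b\<in>Bs. s (\<psi> b x) b)"
  proof
    fix x assume "x \<in> F"
    then have "x \<in> V.span Bs" using B(3) by auto
    then obtain u where u: "x = (\<Sum>v\<in>Bs. s (u v) v)" using V.span_finite[OF fB] by auto
    have "\<And>b. b \<in> Bs \<Longrightarrow> \<psi> b x = u b"
    proof -
      fix b assume b: "b \<in> Bs"
      have "\<psi> b x = (\<Sum>v\<in>Bs. u v * \<psi> b v)" unfolding u by (simp add: lin_sum[OF l] lin_scale[OF l])
      also have "\<dots> = (\<Sum>v\<in>Bs. if v = b then u v else 0)" by (rule sum.cong) (auto simp: \<psi>(2))
      also have "\<dots> = u b" using b fB by simp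
      finally show "\<psi> b x = u b" .
    qed
    then show "x = (\<Sum>b\<in>Bs. s (\<psi> b x) b)" using u by simp
  qed
  then show ?thesis using B(1) l by blast
qed

lemma fin_subspace:
  assumes vs: "vector_space s" and S: "module.subspace s S" and T: "finite T" "S \<subseteq> module.span s T"
  shows "\<exists>B. finite B \<and> module.span s B = S"
proof -
  interpret V: vector_space s by fact
  obtain B where B: "B \<subseteq> S" "V.independent B" "S \<subseteq> V.span B" by (rule V.basis_exists)
  have "finite B" using V.independent_span_bound[OF T(1) B(2)] B(1) T(2) by auto
  moreover have "V.span B = S" using V.span_minimal[OF B(1) S] B(3) by auto
  ultimately show ?thesis by blast
qed


section \<open>Contractions\<close>

definition cont :: "('k::field \<Rightarrow> 'm::ab_group_add \<Rightarrow> 'm) \<Rightarrow> ('c \<Rightarrow> 'k) \<Rightarrow> ('m \<times> 'c) list \<Rightarrow> 'm" where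
  "cont s \<phi> xs = sum_list (map (\<lambda>(a, b). s (\<phi> b) a) xs)"

lemma cont_Nil[simp]: "cont s \<phi> [] = 0" by (simp add: cont_def)
lemma cont_Cons[simp]: "cont s \<phi> ((a, b) # xs) = s (\<phi> b) a + cont s \<phi> xs" by (simp add: cont_def)
lemma cont_append[simp]: "cont s \<phi> (xs @ ys) = cont s \<phi> xs + cont s \<phi> ys" by (simp add: cont_def)
lemma cont_cong: "(\<And>a b. (a, b) \<in> set xs \<Longrightarrow> \<phi> b = \<psi> b) \<Longrightarrow> cont s \<phi> xs = cont s \<psi> xs"
  unfolding cont_def by (rule arg_cong[where f=sum_list], rule map_cong) auto

context vector_space begin

lemma cont_span: "cont scale \<phi> xs \<in> span (fst ` set xs)"
proof (induction xs)
  case Nil then show ?case by (simp add: span_zero)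
next
  case (Cons p xs)
  obtain a b where p: "p = (a, b)" by fastforce
  have "cont scale \<phi> xs \<in> span (fst ` set (p # xs))" using Cons span_mono[of "fst ` set xs" "fst ` set (p # xs)"] by auto
  moreover have "scale (\<phi> b) a \<in> span (fst ` set (p # xs))" using p by (intro span_scale span_base) auto
  ultimately show ?case using p by (simp add: span_add)
qed

lemma cont_zero: "cont scale (\<lambda>_. 0) xs = 0" by (induction xs) auto
lemma cont_add: "cont scale (\<lambda>x. \<phi> x + \<psi> x) xs = cont scale \<phi> xs + cont scale \<psi> xs"
  by (induction xs) (auto simp: scale_left_distrib algebra_simps)
lemma cont_scale: "cont scale (\<lambda>x. c * \<phi> x) xs = scale c (cont scale \<phi> xs)"
  by (induction xs) (auto simp: scale_right_distrib)

lemma scale_sum_list: "scale (sum_list (map h L)) n = sum_list (map (\<lambda>x. scale (h x) n) L)"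
  by (induction L) (auto simp: scale_left_distrib)

end

lemma g2_1: "(\<lambda>p. ind (a + a', b) p - ind (a, b) p - ind (a', b) p) \<in> gens2 sa sb"
  unfolding gens2_def by blast
lemma g2_2: "(\<lambda>p. ind (a, b + b') p - ind (a, b) p - ind (a, b') p) \<in> gens2 sa sb"
  unfolding gens2_def by blast
lemma g2_3: "(\<lambda>p. ind (sa c a, b) p - c * ind (a, b) p) \<in> gens2 sa sb"
  unfolding gens2_def by blast
lemma g2_4: "(\<lambda>p. ind (a, sb c b) p - c * ind (a, b) p) \<in> gens2 sa sb"
  unfolding gens2_def by blast

lemma fun3: "ind q1 - ind q2 - ind q3 = (\<lambda>p. ind q1 p - ind q2 p - ind q3 p)"
  by (simp add: fun_diff_def)
lemma fun2: "ind q1 - sF c (ind q2) = (\<lambda>p. ind q1 p - c * ind q2 p)"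
  by (simp add: fun_diff_def sF_def)

lemma teq3_contract:
  assumes t: "teq3 sM sC sC xs ys" and vM: "vector_space sM" and l: "lin sC \<phi>"
  shows "teq2 sM sC (map (\<lambda>(a, b, e). (sM (\<phi> e) a, b)) xs) (map (\<lambda>(a, b, e). (sM (\<phi> e) a, b)) ys)"
proof -
  interpret VF: vector_space "sF :: 'a \<Rightarrow> ('b \<times> 'c \<Rightarrow> 'a) \<Rightarrow> _" by (rule vs_fun)
  interpret VM: vector_space sM by fact
  let ?f = "\<lambda>(a, b, e). (sM (\<phi> e) a, b)"
  have "(\<lambda>p. free (map ?f xs) p - free (map ?f ys) p) \<in> rspan (gens2 sM sC)"
  proof (rule push_rspan[OF t[unfolded teq3_def] fin_gens3])
    fix g assume "g \<in> gens3 sM sC sC"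
    have h1: "\<And>a a' b e. Ev sF (\<lambda>p. ind (?f p)) (\<lambda>p. ind (a + a', b, e) p - ind (a, b, e) p - ind (a', b, e) p) \<in> rspan (gens2 sM sC)"
      unfolding VF.Ev3 fun3 by (rule gen_rspan) (simp add: VM.scale_right_distrib g2_1)
    have h2: "\<And>a b b' e. Ev sF (\<lambda>p. ind (?f p)) (\<lambda>p. ind (a, b + b', e) p - ind (a, b, e) p - ind (a, b', e) p) \<in> rspan (gens2 sM sC)"
      unfolding VF.Ev3 fun3 by (rule gen_rspan) (simp add: g2_2)
    have h3: "\<And>a b e e'. Ev sF (\<lambda>p. ind (?f p)) (\<lambda>p. ind (a, b, e + e') p - ind (a, b, e) p - ind (a, b, e') p) \<in> rspan (gens2 sM sC)"
      unfolding VF.Ev3 fun3 by (rule gen_rspan) (simp add: lin_add[OF l] VM.scale_left_distrib g2_1)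
    have h4: "\<And>c a b e. Ev sF (\<lambda>p. ind (?f p)) (\<lambda>p. ind (sM c a, b, e) p - c * ind (a, b, e) p) \<in> rspan (gens2 sM sC)"
    proof -
      fix c a b e
      have e: "sM (\<phi> e) (sM c a) = sM c (sM (\<phi> e) a)" by (simp add: mult.commute)
      show "?thesis c a b e" unfolding VF.Ev2 fun2
        by (rule gen_rspan) (simp only: case_prod_conv e g2_3)
    qed
    have h5: "\<And>c a b e. Ev sF (\<lambda>p. ind (?f p)) (\<lambda>p. ind (a, sC c b, e) p - c * ind (a, b, e) p) \<in> rspan (gens2 sM sC)"
      unfolding VF.Ev2 fun2 by (rule gen_rspan) (simp only: case_prod_conv g2_4)
    have h6: "\<And>c a b e. Ev sF (\<lambda>p. ind (?f p)) (\<lambda>p. ind (a, b, sC c e) p - c * ind (a, b, e) p) \<in> rspan (gens2 sM sC)"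
    proof -
      fix c a b e
      have e: "sM (\<phi> (sC c e)) a = sM c (sM (\<phi> e) a)" by (simp add: lin_scale[OF l])
      show "?thesis c a b e" unfolding VF.Ev2 fun2
        by (rule gen_rspan) (simp only: case_prod_conv e g2_3)
    qed
    show "Ev sF (\<lambda>p. ind (?f p)) g \<in> rspan (gens2 sM sC)"
      using \<open>g \<in> gens3 sM sC sC\<close> h1 h2 h3 h4 h5 h6 unfolding gens3_def by auto
  qed
  then show ?thesis by (simp add: teq2_def)
qed

lemma free_distinct: "distinct bl \<Longrightarrow> free (map h bl) = (\<lambda>p. \<Sum>b\<in>set bl. ind (h b) p)"
  by (induction bl) (auto simp: free_Nil free_Cons fun_eq_iff add.commute)

lemma basis_change:
  assumes va: "vector_space sa" and vb: "vector_space sb" and fB: "finite Bs"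
    and l: "\<And>b. lin sb (\<psi> b)"
    and rep: "\<And>a g. (a, g) \<in> set P \<Longrightarrow> g = (\<Sum>b\<in>Bs. sb (\<psi> b g) b)"
  shows "req (gens2 sa sb) (free P) (\<lambda>p. \<Sum>b\<in>Bs. ind (cont sa (\<psi> b) P, b) p)"
  using rep
proof (induction P)
  case Nil
  have "req (gens2 sa sb) (\<lambda>p. \<Sum>b\<in>Bs. ind (0, b) p) (\<lambda>p. \<Sum>b\<in>Bs. (\<lambda>_. 0) p)"
    by (rule req_sum[OF fB t_zeroL[OF va]])
  then show ?case by (simp add: free_Nil req_sym)
next
  case (Cons q P)
  obtain a g where q: "q = (a, g)" by fastforce
  have IH: "req (gens2 sa sb) (free P) (\<lambda>p. \<Sum>b\<in>Bs. ind (cont sa (\<psi> b) P, b) p)"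
    using Cons by auto
  have g: "g = (\<Sum>b\<in>Bs. sb (\<psi> b g) b)" using Cons.prems q by auto
  have "req (gens2 sa sb) (ind (a, g)) (\<lambda>p. \<Sum>b\<in>Bs. ind (a, sb (\<psi> b g) b) p)"
    using t_sumR[OF vb fB, of sa a "\<lambda>b. sb (\<psi> b g) b"] g by simp
  also have "req (gens2 sa sb) \<dots> (\<lambda>p. \<Sum>b\<in>Bs. ind (sa (\<psi> b g) a, b) p)"
    by (rule req_sum[OF fB t_swap])
  finally have A: "req (gens2 sa sb) (ind (a, g)) (\<lambda>p. \<Sum>b\<in>Bs. ind (sa (\<psi> b g) a, b) p)" .
  have "req (gens2 sa sb) (free (q # P)) (\<lambda>p. (\<Sum>b\<in>Bs. ind (cont sa (\<psi> b) P, b) p) + (\<Sum>b\<in>Bs. ind (sa (\<psi> b g) a, b) p))"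
    unfolding free_Cons q by (rule req_add[OF IH A])
  also have "req (gens2 sa sb) \<dots> (\<lambda>p. \<Sum>b\<in>Bs. ind (sa (\<psi> b g) a, b) p + ind (cont sa (\<psi> b) P, b) p)"
    by (rule req_eqI) (simp add: sum.distrib add.commute)
  also have "req (gens2 sa sb) \<dots> (\<lambda>p. \<Sum>b\<in>Bs. ind (sa (\<psi> b g) a + cont sa (\<psi> b) P, b) p)"
    by (rule req_sum[OF fB req_sym[OF t_addL]])
  finally show ?case using q by simp
qed


lemma lin_0: "lin s (\<lambda>_. 0)" by (simp add: lin_def)
lemma lin_plus: "lin s \<phi> \<Longrightarrow> lin s \<psi> \<Longrightarrow> lin s (\<lambda>x. \<phi> x + \<psi> x)"
  by (simp add: lin_def algebra_simps)
lemma lin_cmul: "lin s \<phi> \<Longrightarrow> lin s (\<lambda>x. c * \<phi> x)"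
  by (simp add: lin_def algebra_simps)

lemma teq2_trans: "teq2 sa sb xs ys \<Longrightarrow> teq2 sa sb ys zs \<Longrightarrow> teq2 sa sb xs zs"
  unfolding teq2_req by (rule req_trans)

lemma rho_lin:
  assumes vM: "vector_space sM" and MY: "module.subspace sM MY"
    and add: "\<And>m n. m \<in> MY \<Longrightarrow> n \<in> MY \<Longrightarrow> teq2 sM sC (r (m + n)) (r m @ r n)"
    and sc: "\<And>c m. m \<in> MY \<Longrightarrow> teq2 sM sC (r (sM c m)) (map (\<lambda>(a, b). (sM c a, b)) (r m))"
    and L: "fst ` set L \<subseteq> MY"
  shows "teq2 sM sC (r (cont sM \<phi> L)) (concat (map (\<lambda>(a, b). map (\<lambda>(x, y). (sM (\<phi> b) x, y)) (r a)) L))"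
  using L
proof (induction L)
  case Nil
  interpret V: vector_space sM by fact
  have z: "0 \<in> MY" using MY by (simp add: V.subspace_def)
  have "(\<lambda>p. free (r 0) p - (free (r 0) p + free (r 0) p)) \<in> rspan (gens2 sM sC)"
    using add[OF z z] by (simp add: teq2_def free_append)
  then have "(\<lambda>p. (-1) * (free (r 0) p - (free (r 0) p + free (r 0) p))) \<in> rspan (gens2 sM sC)"
    by (rule rspan_scale)
  then show ?case by (simp add: teq2_def free_Nil)
next
  case (Cons q L)
  interpret V: vector_space sM by fact
  obtain a b where q: "q = (a, b)" by fastforce
  have aM: "a \<in> MY" using Cons.prems q by auto
  have LM: "fst ` set L \<subseteq> MY" using Cons.prems by auto
  have cM: "cont sM \<phi> L \<in> MY"
    using V.cont_span[of \<phi> L] V.span_minimal[OF LM MY] by auto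
  have saM: "sM (\<phi> b) a \<in> MY" using aM MY by (simp add: V.subspace_def)
  have IH: "teq2 sM sC (r (cont sM \<phi> L)) (concat (map (\<lambda>(a, b). map (\<lambda>(x, y). (sM (\<phi> b) x, y)) (r a)) L))"
    using Cons.IH[OF LM] .
  have "teq2 sM sC (r (cont sM \<phi> (q # L))) (r (sM (\<phi> b) a) @ r (cont sM \<phi> L))"
    using add[OF saM cM] q by simp
  moreover have "teq2 sM sC (r (sM (\<phi> b) a) @ r (cont sM \<phi> L))
     (map (\<lambda>(x, y). (sM (\<phi> b) x, y)) (r a) @ concat (map (\<lambda>(a, b). map (\<lambda>(x, y). (sM (\<phi> b) x, y)) (r a)) L))"
    using req_add[OF sc[OF aM, of "\<phi> b", unfolded teq2_req] IH[unfolded teq2_req]]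
    by (simp add: teq2_req free_append)
  ultimately show ?case using q by (auto intro: teq2_trans)
qed

lemma (in vector_space) cont_K:
  "cont scale \<psi> (map (\<lambda>(g1, g2). (scale (\<phi> g2) n, g1)) K) =
        scale (sum_list (map (\<lambda>(g1, g2). \<psi> g1 * \<phi> g2) K)) n"
  by (induction K) (auto simp: scale_left_distrib)

lemma (in vector_space) cont_B:
  "cont scale \<psi> (concat (map (\<lambda>(n, g). map (\<lambda>(g1, g2). (scale (\<phi> g2) n, g1)) (D g)) L))
   = cont scale (\<lambda>g. sum_list (map (\<lambda>(g1, g2). \<psi> g1 * \<phi> g2) (D g))) L"
proof (induction L)
  case Nil then show ?case by simp
next
  case (Cons q L)
  obtain n g where q: "q = (n, g)" by fastforce
  show ?case using Cons q cont_K[of \<psi> \<phi> n "D g"] by simp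
qed


lemma sum_map_scale: "lin s \<psi> \<Longrightarrow>
  sum_list (map (\<lambda>(g1, g2). \<psi> g1 * \<phi> g2) (map (\<lambda>(a, b). (s c a, b)) K)) =
  c * sum_list (map (\<lambda>(g1, g2). \<psi> g1 * \<phi> g2) K)"
  by (induction K) (auto simp: lin_scale algebra_simps)

theorem proposition2p4:
  fixes sC :: "'k::field \<Rightarrow> 'c::ab_group_add \<Rightarrow> 'c"
    and C :: "'o \<Rightarrow> 'o \<Rightarrow> 'c set"
    and delta :: "'o \<Rightarrow> 'o \<Rightarrow> 'o \<Rightarrow> 'c \<Rightarrow> ('c \<times> 'c) list"
    and eps :: "'o \<Rightarrow> 'c \<Rightarrow> 'k"
    and sM :: "'k \<Rightarrow> 'm::ab_group_add \<Rightarrow> 'm"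
    and M :: "'o \<Rightarrow> 'm set"
    and rho :: "'o \<Rightarrow> 'o \<Rightarrow> 'm \<Rightarrow> ('m \<times> 'c) list"
    and X :: 'o and m :: 'm
  assumes "coalgebra_so sC C delta eps"
    and "right_comodule sC C delta eps sM M rho"
    and "m \<in> M X"
  shows "\<exists>N. subcomodule sC C sM M rho N \<and> m \<in> N X \<and>
           (\<forall>Y. \<exists>B. finite B \<and> module.span sM B = N Y)"
proof -
  note co = assms(1)[unfolded coalgebra_so_def]
  note cm = assms(2)[unfolded right_comodule_def]
  have vC: "vector_space sC" using co[THEN conjunct1] by simp
  have Csub: "\<And>X Y. module.subspace sC (C X Y)" using co[THEN conjunct2, THEN conjunct1] by blast
  have dset: "\<And>X Y Z f. f \<in> C X Z \<Longrightarrow> set (delta X Y Z f) \<subseteq> C Y Z \<times> C X Y" using co[THEN conjunct2, THEN conjunct2, THEN conjunct1] by blast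
  have dadd: "\<And>X Y Z f g. f \<in> C X Z \<Longrightarrow> g \<in> C X Z \<Longrightarrow>
        teq2 sC sC (delta X Y Z (f + g)) (delta X Y Z f @ delta X Y Z g)" using co[THEN conjunct2, THEN conjunct2, THEN conjunct2, THEN conjunct1] by blast
  have dsc: "\<And>X Y Z c f. f \<in> C X Z \<Longrightarrow>
        teq2 sC sC (delta X Y Z (sC c f)) (map (\<lambda>(a, b). (sC c a, b)) (delta X Y Z f))" using co[THEN conjunct2, THEN conjunct2, THEN conjunct2, THEN conjunct2, THEN conjunct1] by blast
  have eadd: "\<And>X f g. f \<in> C X X \<Longrightarrow> g \<in> C X X \<Longrightarrow> eps X (f + g) = eps X f + eps X g" using co[THEN conjunct2, THEN conjunct2, THEN conjunct2, THEN conjunct2, THEN conjunct2, THEN conjunct1] by blast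
  have esc: "\<And>X c f. f \<in> C X X \<Longrightarrow> eps X (sC c f) = c * eps X f" using co[THEN conjunct2, THEN conjunct2, THEN conjunct2, THEN conjunct2, THEN conjunct2, THEN conjunct2, THEN conjunct1] by blast
  have vM: "vector_space sM" using cm[THEN conjunct1] by simp
  have Msub: "\<And>X. module.subspace sM (M X)" using cm[THEN conjunct2, THEN conjunct1] by blast
  have rset: "\<And>X Y m. m \<in> M X \<Longrightarrow> set (rho X Y m) \<subseteq> M Y \<times> C X Y" using cm[THEN conjunct2, THEN conjunct2, THEN conjunct1] by blast
  have radd: "\<And>X Y m n. m \<in> M X \<Longrightarrow> n \<in> M X \<Longrightarrow>
        teq2 sM sC (rho X Y (m + n)) (rho X Y m @ rho X Y n)" using cm[THEN conjunct2, THEN conjunct2, THEN conjunct2, THEN conjunct1] by blast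
  have rsc: "\<And>X Y c m. m \<in> M X \<Longrightarrow>
        teq2 sM sC (rho X Y (sM c m)) (map (\<lambda>(a, b). (sM c a, b)) (rho X Y m))" using cm[THEN conjunct2, THEN conjunct2, THEN conjunct2, THEN conjunct2, THEN conjunct1] by blast
  have rco: "\<And>X Y Z m. m \<in> M X \<Longrightarrow>
        teq3 sM sC sC
          (concat (map (\<lambda>(n, b). map (\<lambda>(n0, n1). (n0, n1, b)) (rho Z Y n)) (rho X Z m)))
          (concat (map (\<lambda>(n, g). map (\<lambda>(g1, g2). (n, g1, g2)) (delta X Z Y g)) (rho X Y m)))"
    using cm[THEN conjunct2, THEN conjunct2, THEN conjunct2, THEN conjunct2, THEN conjunct2, THEN conjunct1] by blast
  have rcu: "\<And>X m. m \<in> M X \<Longrightarrow> sum_list (map (\<lambda>(n, g). sM (eps X g) n) (rho X X m)) = m"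
    using cm[THEN conjunct2, THEN conjunct2, THEN conjunct2, THEN conjunct2, THEN conjunct2, THEN conjunct2] by blast
  interpret VM: vector_space sM by (rule vM)
  interpret VC: vector_space sC by (rule vC)
  define R where "R Y = rho X Y m" for Y
  define N where "N Y = {cont sM \<phi> (R Y) | \<phi>. lin sC \<phi>}" for Y
  have Rset: "\<And>Y. set (R Y) \<subseteq> M Y \<times> C X Y" unfolding R_def using rset[OF assms(3)] .
  have NM: "\<And>Y. N Y \<subseteq> VM.span (fst ` set (R Y))"
    unfolding N_def using VM.cont_span by blast
  have spM: "\<And>Y. VM.span (fst ` set (R Y)) \<subseteq> M Y"
  proof -
    fix Y
    have "fst ` set (R Y) \<subseteq> M Y" using Rset[of Y] by auto
    then show "VM.span (fst ` set (R Y)) \<subseteq> M Y" by (rule VM.span_minimal[OF _ Msub])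
  qed
  have Nsub: "\<And>Y. VM.subspace (N Y)"
  proof (rule VM.subspaceI)
    fix Y
    show "0 \<in> N Y" unfolding N_def
      by (intro CollectI exI[of _ "\<lambda>_. 0"]) (simp add: lin_0 VM.cont_zero)
    fix x y assume "x \<in> N Y" "y \<in> N Y"
    then obtain \<phi> \<psi> where "lin sC \<phi>" "x = cont sM \<phi> (R Y)" "lin sC \<psi>" "y = cont sM \<psi> (R Y)"
      unfolding N_def by blast
    then show "x + y \<in> N Y" unfolding N_def
      by (intro CollectI exI[of _ "\<lambda>x. \<phi> x + \<psi> x"]) (simp add: lin_plus VM.cont_add)
  next
    fix Y c x assume "x \<in> N Y"
    then obtain \<phi> where "lin sC \<phi>" "x = cont sM \<phi> (R Y)" unfolding N_def by blast
    then show "sM c x \<in> N Y" unfolding N_def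
      by (intro CollectI exI[of _ "\<lambda>x. c * \<phi> x"]) (simp add: lin_cmul VM.cont_scale)
  qed
  have fin: "\<forall>Y. \<exists>B. finite B \<and> module.span sM B = N Y"
    using fin_subspace[OF vM Nsub finite_imageI[OF finite_set] NM] by blast
  have mN: "m \<in> N X"
  proof -
    obtain g where g: "lin sC g" "\<forall>x\<in>C X X. g x = eps X x"
      using ext_lin[OF vC Csub[of X X] eadd[where X=X] esc[where X=X]] by blast
    have "cont sM g (R X) = cont sM (eps X) (R X)"
      by (rule cont_cong) (use g(2) Rset in auto)
    also have "\<dots> = m" using rcu[OF assms(3)] by (simp add: cont_def R_def)
    finally show ?thesis unfolding N_def using g(1) by (intro CollectI exI[of _ g]) simp
  qed
  have clos: "\<exists>ys. set ys \<subseteq> N Z \<times> C Y Z \<and> teq2 sM sC (rho Y Z n) ys" if nN: "n \<in> N Y" for Y Z n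
  proof -
    obtain \<phi> where l: "lin sC \<phi>" and n: "n = cont sM \<phi> (R Y)" using nN unfolding N_def by blast
    define A where "A = concat (map (\<lambda>(a, b). map (\<lambda>(x, y). (sM (\<phi> b) x, y)) (rho Y Z a)) (R Y))"
    define B where "B = concat (map (\<lambda>(n, g). map (\<lambda>(g1, g2). (sM (\<phi> g2) n, g1)) (delta X Y Z g)) (R Z))"
    have tA: "teq2 sM sC (rho Y Z n) A"
      unfolding n A_def by (rule rho_lin[OF vM Msub radd rsc]) (use Rset[of Y] in auto)
    have tAB: "teq2 sM sC A B"
    proof -
      have "teq2 sM sC
         (map (\<lambda>(a, b, e). (sM (\<phi> e) a, b)) (concat (map (\<lambda>(n, b). map (\<lambda>(n0, n1). (n0, n1, b)) (rho Y Z n)) (R Y))))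
         (map (\<lambda>(a, b, e). (sM (\<phi> e) a, b)) (concat (map (\<lambda>(n, g). map (\<lambda>(g1, g2). (n, g1, g2)) (delta X Y Z g)) (R Z))))"
        unfolding R_def by (rule teq3_contract[OF rco[OF assms(3)] vM l])
      moreover have "map (\<lambda>(a, b, e). (sM (\<phi> e) a, b)) (concat (map (\<lambda>(n, b). map (\<lambda>(n0, n1). (n0, n1, b)) (rho Y Z n)) (R Y))) = A"
        unfolding A_def by (simp add: map_concat split_def comp_def)
      moreover have "map (\<lambda>(a, b, e). (sM (\<phi> e) a, b)) (concat (map (\<lambda>(n, g). map (\<lambda>(g1, g2). (n, g1, g2)) (delta X Y Z g)) (R Z))) = B"
        unfolding B_def by (simp add: map_concat split_def comp_def)
      ultimately show ?thesis by simp
    qed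
    have Bset: "snd ` set B \<subseteq> C Y Z"
    proof
      fix x assume "x \<in> snd ` set B"
      then obtain n g g2 where "(n, g) \<in> set (R Z)" "(x, g2) \<in> set (delta X Y Z g)"
        unfolding B_def by auto
      then show "x \<in> C Y Z" using Rset dset by blast
    qed
    obtain Bs \<psi> where Bs: "Bs \<subseteq> snd ` set B" and l\<psi>: "\<And>b. lin sC (\<psi> b)"
      and rep: "\<forall>x\<in>snd ` set B. x = (\<Sum>b\<in>Bs. sC (\<psi> b x) b)"
      using dual_basis[OF vC, of "snd ` set B"] by auto
    have fBs: "finite Bs" using Bs finite_subset by blast
    obtain bl where bl: "set bl = Bs" "distinct bl" using finite_distinct_list[OF fBs] by blast
    define ys where "ys = map (\<lambda>b. (cont sM (\<psi> b) B, b)) bl"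
    have tBy: "teq2 sM sC B ys"
      unfolding teq2_req ys_def free_distinct[OF bl(2)] bl(1)
      by (rule basis_change[OF vM vC fBs l\<psi>]) (use rep in force)
    have yset: "set ys \<subseteq> N Z \<times> C Y Z"
    proof
      fix p assume "p \<in> set ys"
      then obtain b where p: "p = (cont sM (\<psi> b) B, b)" and b: "b \<in> Bs" unfolding ys_def bl(1)[symmetric] by auto
      have bC: "b \<in> C Y Z" using subsetD[OF Bset subsetD[OF Bs b]] .
      define \<chi> where "\<chi> g = sum_list (map (\<lambda>(g1, g2). \<psi> b g1 * \<phi> g2) (delta X Y Z g))" for g
      have eq: "cont sM (\<psi> b) B = cont sM \<chi> (R Z)" unfolding B_def \<chi>_def by (rule VM.cont_B)
      have \<chi>add: "\<chi> (f + g) = \<chi> f + \<chi> g" if "f \<in> C X Z" "g \<in> C X Z" for f g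
      proof -
        have "sum_list (map (\<lambda>(g1, g2). \<psi> b g1 * \<phi> g2) (delta X Y Z (f + g))) =
              sum_list (map (\<lambda>(g1, g2). \<psi> b g1 * \<phi> g2) (delta X Y Z f @ delta X Y Z g))"
          by (rule teq2_sum[OF dadd[OF that] vs_k])
             (auto simp: lin_add[OF l\<psi>] lin_add[OF l] lin_scale[OF l\<psi>] lin_scale[OF l] algebra_simps)
        then show ?thesis unfolding \<chi>_def by simp
      qed
      have \<chi>sc: "\<chi> (sC c f) = c * \<chi> f" if "f \<in> C X Z" for c f
      proof -
        have "sum_list (map (\<lambda>(g1, g2). \<psi> b g1 * \<phi> g2) (delta X Y Z (sC c f))) =
              sum_list (map (\<lambda>(g1, g2). \<psi> b g1 * \<phi> g2) (map (\<lambda>(a, b). (sC c a, b)) (delta X Y Z f)))"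
          by (rule teq2_sum[OF dsc[OF that] vs_k])
             (auto simp: lin_add[OF l\<psi>] lin_add[OF l] lin_scale[OF l\<psi>] lin_scale[OF l] algebra_simps)
        also have "\<dots> = c * \<chi> f" unfolding \<chi>_def
          by (rule sum_map_scale[OF l\<psi>])
        finally show ?thesis unfolding \<chi>_def .
      qed
      obtain \<chi>' where \<chi>': "lin sC \<chi>'" "\<forall>x\<in>C X Z. \<chi>' x = \<chi> x"
        using ext_lin[OF vC Csub[of X Z] \<chi>add \<chi>sc] by blast
      have "cont sM \<chi>' (R Z) = cont sM \<chi> (R Z)"
        by (rule cont_cong) (use \<chi>'(2) Rset in auto)
      then have "cont sM (\<psi> b) B \<in> N Z" unfolding N_def eq using \<chi>'(1)
        by (intro CollectI exI[of _ \<chi>']) simp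
      then show "p \<in> N Z \<times> C Y Z" using p bC by auto
    qed
    show ?thesis using yset teq2_trans[OF teq2_trans[OF tA tAB] tBy] by blast
  qed
  have "subcomodule sC C sM M rho N"
    unfolding subcomodule_def
  proof (intro conjI allI impI)
    fix Y show "module.subspace sM (N Y)" by (rule Nsub)
    show "N Y \<subseteq> M Y" using NM[of Y] spM[of Y] by (rule order_trans)
  next
    fix Y Z n assume "n \<in> N Y"
    then show "\<exists>ys. set ys \<subseteq> N Z \<times> C Y Z \<and> teq2 sM sC (rho Y Z n) ys" by (rule clos)
  qed
  then show ?thesis using mN fin by blast
qed

end
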